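(* Let $A$ be a commutative nilpotent $\mathbb{F}_p$-algebra of finite dimension $n$, and let $e\ge1$ be such that $A^e\ne 0$ and $A^{e+1}=0$. For $k\ge 0$ let $N_k=\{a\in A: x_1\cdots x_k a=0 \text{ for all } x_1,\dots,x_k\in A\}$ (so $N_0=0$ and $N_e=A$). For $x\in A$ let $q(x)=\dim_{\mathbb{F}_p}(\mathbb{F}_p x+Ax)$, and for $1\le t\le e$ let $q_t=\min_{x\in N_t\setminus N_{t-1}} q(x)$. Let $G$ be the map from $\mathbb{F}_p$-subspaces of $A$ to ideals of $A$ given by $G(V)=V+AV$. Then for each $t$ with $1\le t\le e$ and every ideal $J$ of $A$ with $J\subseteq N_t$ and $J\not\subseteq N_{t-1}$, \[ |G^{-1}(J)|\ge p^{\lfloor q_t^2/4\rfloor}. \] Consequently, \[ p^{\lfloor q_t^2/4\rfloor}\bigl(i(N_t)-i(N_{t-1})\bigr)\le s(N_t)-s(N_{t-1}), \] where for a subspace $J$ of $A$, $s(J)$ is the number of $\mathbb{F}_p$-subspaces of $J$ and, for an ideal $J$, $i(J)$ is the number of ideals of $A$ contained in $J$.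
   Context: Algebras are commutative, associative, not necessarily unital. $AV$ denotes the span of products $av$ with $a\in A$, $v\in V$. *)

theory Defs
  imports Main "HOL.Vector_Spaces" "HOL-Computational_Algebra.Primes"
begin

text \<open>A commutative, associative, not necessarily unital algebra over a field:
  the carrier is the whole type 'a (class comm_ring: commutative, associative,
  distributive, no unit required), with a scalar multiplication s making it a
  vector space, compatible with the product.\<close>

definition is_algebra :: "('k::field \<Rightarrow> 'a::comm_ring \<Rightarrow> 'a) \<Rightarrow> bool" where
  "is_algebra s \<longleftrightarrow> vector_space s \<and> (\<forall>c x y. s c (x * y) = s c x * y)"

definition fin_dim_alg :: "('k::field \<Rightarrow> 'a::comm_ring \<Rightarrow> 'a) \<Rightarrow> bool" where
  "fin_dim_alg s \<longleftrightarrow> (\<exists>B. finite B \<and> module.span s B = UNIV)"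

text \<open>A^k (k \<ge> 1): the span of all products of k elements of A.\<close>
definition alg_pow :: "('k::field \<Rightarrow> 'a::comm_ring \<Rightarrow> 'a) \<Rightarrow> nat \<Rightarrow> 'a set" where
  "alg_pow s k = module.span s {foldr (*) xs a | xs a. length xs + 1 = k}"

definition annN :: "nat \<Rightarrow> 'a::comm_ring set" where
  "annN k = {a. \<forall>xs. length xs = k \<longrightarrow> foldr (*) xs a = 0}"

definition qdim :: "('k::field \<Rightarrow> 'a::comm_ring \<Rightarrow> 'a) \<Rightarrow> 'a \<Rightarrow> nat" where
  "qdim s x = vector_space.dim s {s c x + a * x | c a. True}"

definition qmin :: "('k::field \<Rightarrow> 'a::comm_ring \<Rightarrow> 'a) \<Rightarrow> nat \<Rightarrow> nat" where
  "qmin s t = Min (qdim s ` (annN t - annN (t - 1)))"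

definition AV :: "('k::field \<Rightarrow> 'a::comm_ring \<Rightarrow> 'a) \<Rightarrow> 'a set \<Rightarrow> 'a set" where
  "AV s V = module.span s {a * v | a v. v \<in> V}"

definition Gmap :: "('k::field \<Rightarrow> 'a::comm_ring \<Rightarrow> 'a) \<Rightarrow> 'a set \<Rightarrow> 'a set" where
  "Gmap s V = {v + w | v w. v \<in> V \<and> w \<in> AV s V}"

definition is_ideal :: "('k::field \<Rightarrow> 'a::comm_ring \<Rightarrow> 'a) \<Rightarrow> 'a set \<Rightarrow> bool" where
  "is_ideal s J \<longleftrightarrow> module.subspace s J \<and> (\<forall>a j. j \<in> J \<longrightarrow> a * j \<in> J)"

definition num_subspaces :: "('k::field \<Rightarrow> 'a::comm_ring \<Rightarrow> 'a) \<Rightarrow> 'a set \<Rightarrow> nat" where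
  "num_subspaces s J = card {V. module.subspace s V \<and> V \<subseteq> J}"

definition num_ideals :: "('k::field \<Rightarrow> 'a::comm_ring \<Rightarrow> 'a) \<Rightarrow> 'a set \<Rightarrow> nat" where
  "num_ideals s J = card {I. is_ideal s I \<and> I \<subseteq> J}"

end

theory Submission
  imports Defs "HOL-Library.FuncSet"
begin


definition msum :: "'a::ab_group_add set \<Rightarrow> 'a set \<Rightarrow> 'a set" where
  "msum X Y = {x + y | x y. x \<in> X \<and> y \<in> Y}"

lemma foldr_mult_right: "foldr (*) xs (b * a) = b * foldr (*) xs (a::'a::comm_ring)"
  by (induction xs) (auto simp: mult.left_commute)

lemma foldr_add: "foldr (*) xs (a + b) = foldr (*) xs a + foldr (*) xs (b::'a::comm_ring)"
  by (induction xs) (auto simp: distrib_left)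

lemma foldr_zero: "foldr (*) xs 0 = (0::'a::comm_ring)"
  by (induction xs) auto

locale falg = vector_space s for s :: "'k::field \<Rightarrow> 'a::comm_ring \<Rightarrow> 'a" +
  assumes smult: "s c (x * y) = s c x * y"
  and finUNIV: "finite (UNIV::'a set)"
begin

lemma smult_right: "s c (x * y) = x * s c y"
  by (metis smult mult.commute)

lemma foldr_scale: "foldr (*) xs (s c a) = s c (foldr (*) xs a)"
  by (induction xs) (auto simp: smult_right)

lemma subspace_foldr_pre: "subspace M \<Longrightarrow> subspace {y. foldr (*) xs y \<in> M}"
  unfolding subspace_def by (auto simp: foldr_add foldr_scale foldr_zero)

lemma annN_mono: "(annN k :: 'a set) \<subseteq> annN (Suc k)"
proof
  fix a :: 'a assume a: "a \<in> annN k"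
  show "a \<in> annN (Suc k)" unfolding annN_def
  proof (intro CollectI allI impI)
    fix xs :: "'a list" assume "length xs = Suc k"
    then obtain y ys where "xs = y # ys" "length ys = k" by (cases xs) auto
    then show "foldr (*) xs a = 0" using a by (simp add: annN_def)
  qed
qed

lemma annN_mono': "k \<le> l \<Longrightarrow> (annN k :: 'a set) \<subseteq> annN l"
  by (induction l rule: dec_induct) (use annN_mono in auto)

lemma ideal_annN: "is_ideal s (annN k)"
  unfolding is_ideal_def subspace_def annN_def
  by (auto simp: foldr_add foldr_scale foldr_zero foldr_mult_right)

lemma ideal_subspace: "is_ideal s J \<Longrightarrow> subspace J"
  by (simp add: is_ideal_def)

lemma ideal_mult: "is_ideal s J \<Longrightarrow> j \<in> J \<Longrightarrow> a * j \<in> J"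
  by (simp add: is_ideal_def)

lemma ideal_foldr: "is_ideal s J \<Longrightarrow> j \<in> J \<Longrightarrow> foldr (*) xs j \<in> J"
  by (induction xs) (auto simp: ideal_mult)

lemma subspace_AV: "subspace (AV s V)"
  by (simp add: AV_def)

lemma AV_mult: assumes "y \<in> AV s V" shows "a * y \<in> AV s V"
proof -
  have "subspace {y. a * y \<in> AV s V}"
    using subspace_AV[of V] unfolding subspace_def
    by (auto simp: distrib_left smult_right[symmetric])
  moreover have "a * y \<in> AV s V" if yy: "y \<in> {b * v |b v. v \<in> V}" for y
  proof -
    obtain b v where "y = b * v" "v \<in> V" using yy by blast
    then have "a * y = (a * b) * v" by (simp add: mult.assoc)
    then show ?thesis unfolding AV_def using \<open>v \<in> V\<close> by (auto intro!: span_base)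
  qed
  ultimately show ?thesis using assms unfolding AV_def
    using span_subspace_induct[of y "{b * v |b v. v \<in> V}" "{y. a * y \<in> AV s V}"]
    by (auto simp: AV_def)
qed

lemma AV_sub: "is_ideal s J \<Longrightarrow> V \<subseteq> J \<Longrightarrow> AV s V \<subseteq> J"
  unfolding AV_def by (rule span_minimal) (auto simp: is_ideal_def)

lemma AV_mono: "V \<subseteq> W \<Longrightarrow> AV s V \<subseteq> AV s W"
  unfolding AV_def by (rule span_mono) auto

lemma msum_sub: "subspace J \<Longrightarrow> X \<subseteq> J \<Longrightarrow> Y \<subseteq> J \<Longrightarrow> msum X Y \<subseteq> J"
  unfolding msum_def by (auto intro: subspace_add)

lemma Gmap_msum: "Gmap s V = msum V (AV s V)"
  by (simp add: Gmap_def msum_def)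

lemma Gmap_sub: "is_ideal s J \<Longrightarrow> V \<subseteq> J \<Longrightarrow> Gmap s V \<subseteq> J"
  unfolding Gmap_msum by (rule msum_sub) (auto simp: is_ideal_def AV_sub)

lemma sub_Gmap: "V \<subseteq> Gmap s V"
  unfolding Gmap_def using span_zero[of "{a * v |a v. v \<in> V}"]
  by (force simp: AV_def)

lemma subspace_msum: "subspace X \<Longrightarrow> subspace Y \<Longrightarrow> subspace (msum X Y)"
  unfolding msum_def by (rule subspace_sums)

lemma ideal_Gmap: assumes "subspace V" shows "is_ideal s (Gmap s V)"
  unfolding is_ideal_def
proof safe
  show "subspace (Gmap s V)" unfolding Gmap_msum by (intro subspace_msum assms subspace_AV)
  fix a j assume "j \<in> Gmap s V"
  then obtain v w where "j = v + w" "v \<in> V" "w \<in> AV s V" by (auto simp: Gmap_def)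
  moreover have "a * v \<in> AV s V" using \<open>v \<in> V\<close> unfolding AV_def by (auto intro!: span_base)
  moreover have "a * w \<in> AV s V" using \<open>w \<in> AV s V\<close> by (rule AV_mult)
  moreover have "0 \<in> V" using assms subspace_0 by blast
  moreover have "a * v + a * w \<in> AV s V"
    using calculation subspace_add[OF subspace_AV] by blast
  ultimately show "a * j \<in> Gmap s V"
    unfolding Gmap_def by (intro CollectI exI[of _ 0] exI[of _ "a*v+a*w"]) (simp add: distrib_left)
qed

lemma Gmap_eq:
  assumes nil: "\<And>xs (a::'a). length xs = e \<Longrightarrow> foldr (*) xs a = 0"
  and J: "is_ideal s J" and V: "subspace V" "V \<subseteq> J" and cov: "J \<subseteq> msum V (AV s J)"
  shows "Gmap s V = J"
proof
  show "Gmap s V \<subseteq> J" by (rule Gmap_sub[OF J V(2)])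
  define T where "T = Gmap s V"
  have T: "is_ideal s T" unfolding T_def by (rule ideal_Gmap[OF V(1)])
  have VT: "V \<subseteq> T" unfolding T_def by (rule sub_Gmap)
  define M where "M k = span {foldr (*) xs j | xs j. length xs = k \<and> j \<in> J}" for k
  have step: "M k \<subseteq> msum T (M (Suc k))" for k
    unfolding M_def[of k]
  proof (rule span_minimal)
    show "subspace (msum T (M (Suc k)))"
      by (intro subspace_msum ideal_subspace[OF T]) (simp add: M_def)
    show "{foldr (*) xs j |xs j. length xs = k \<and> j \<in> J} \<subseteq> msum T (M (Suc k))"
    proof -
      have "foldr (*) xs j \<in> msum T (M (Suc k))" if len: "length xs = k" and j: "j \<in> J" for xs j
      proof -
      obtain v y where jv: "j = v + y" "v \<in> V" "y \<in> AV s J" using cov j unfolding msum_def by blast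
      have "foldr (*) xs v \<in> T" using VT jv(2) ideal_foldr[OF T] by blast
      moreover have "foldr (*) xs y \<in> M (Suc k)"
      proof -
        have "subspace {y. foldr (*) xs y \<in> M (Suc k)}"
          by (rule subspace_foldr_pre) (simp add: M_def)
        moreover have "foldr (*) xs z \<in> M (Suc k)" if zz: "z \<in> {a * v |a v. v \<in> J}" for z
        proof -
          obtain a w where "z = a * w" "w \<in> J" using zz by blast
          then have "foldr (*) xs z = foldr (*) (xs @ [a]) w" by simp
          then show ?thesis unfolding M_def using len \<open>w \<in> J\<close>
            by (intro span_base CollectI exI[of _ "xs @ [a]"] exI[of _ w]) simp
        qed
        ultimately show ?thesis
          using span_subspace_induct[of y "{a * v |a v. v \<in> J}" "{y. foldr (*) xs y \<in> M (Suc k)}"]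
            jv(3) by (auto simp: AV_def)
      qed
      ultimately show "foldr (*) xs j \<in> msum T (M (Suc k))"
        unfolding msum_def jv(1) foldr_add by blast
    qed
    then show ?thesis by blast
    qed
  qed
  have all: "J \<subseteq> msum T (M k)" for k
  proof (induction k)
    case 0
    show ?case
    proof
      fix j assume "j \<in> J"
      then have "j \<in> M 0" unfolding M_def by (intro span_base) force
      moreover have "0 \<in> T" using T ideal_subspace subspace_0 by blast
      ultimately show "j \<in> msum T (M 0)" unfolding msum_def by force
    qed
  next
    case (Suc k)
    show ?case
    proof
      fix j assume "j \<in> J"
      then obtain t m where "j = t + m" "t \<in> T" "m \<in> M k" using Suc unfolding msum_def by blast
      then obtain t' m' where "m = t' + m'" "t' \<in> T" "m' \<in> M (Suc k)" using step unfolding msum_def by blast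
      have "t + t' \<in> T" using \<open>t \<in> T\<close> \<open>t' \<in> T\<close> T ideal_subspace subspace_add by blast
      then show "j \<in> msum T (M (Suc k))" unfolding msum_def
        using \<open>j = t + m\<close> \<open>m = t' + m'\<close> \<open>m' \<in> M (Suc k)\<close>
        by (intro CollectI exI[of _ "t+t'"] exI[of _ m']) (simp add: add.assoc)
    qed
  qed
  have "M e \<subseteq> {0}" unfolding M_def
    by (rule span_minimal) (auto intro: nil)
  then show "J \<subseteq> Gmap s V" using all[of e] unfolding T_def msum_def by fastforce
qed

end

lemma sq_div4: "(d::nat)^2 div 4 \<le> (d div 2) * (d - d div 2)"
proof -
  obtain k where "d = 2*k \<or> d = 2*k+1" by (metis dvd_mult_div_cancel odd_two_times_div_two_succ even_iff_mod_2_eq_zero)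
  then show ?thesis
  proof
    assume "d = 2*k" then show ?thesis by (simp add: power2_eq_square)
  next
    assume d: "d = 2*k+1"
    have "d^2 = 4*(k*k+k) + 1" unfolding d by (simp add: power2_eq_square algebra_simps)
    then have "d^2 div 4 = k*k+k" by simp
    moreover have "d div 2 = k" "d - d div 2 = k + 1" using d by auto
    ultimately show ?thesis by (simp add: algebra_simps)
  qed
qed

lemma arith_main:
  fixes d m r q :: nat
  assumes "d = m + r" "q \<le> d" "q \<le> r + 1"
  defines "n2 \<equiv> (if m \<le> d div 2 then d - d div 2 else r)"
  shows "q^2 div 4 \<le> (d - n2) * n2" and "n2 \<le> r"
proof -
  show "n2 \<le> r" using assms unfolding n2_def by auto
  show "q^2 div 4 \<le> (d - n2) * n2"
  proof (cases "m \<le> d div 2")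
    case True
    then have n: "n2 = d - d div 2" unfolding n2_def by simp
    have "q^2 div 4 \<le> d^2 div 4" using assms(2) by (intro div_le_mono power_mono) auto
    also have "\<dots> \<le> (d div 2) * (d - d div 2)" by (rule sq_div4)
    finally show ?thesis using n by (simp add: algebra_simps)
  next
    case False
    then have n: "n2 = r" "d - n2 = m" unfolding n2_def using assms(1) by auto
    show ?thesis
    proof (cases "q = 0")
      case True then show ?thesis by simp
    next
      case False
      have m: "q + 1 \<le> 2*m" using \<open>\<not> m \<le> d div 2\<close> assms(2) by linarith
      have r: "q - 1 \<le> r" using assms(3) by linarith
      have "(q+1)*(q-1) \<le> (2*m) * r" by (rule mult_le_mono[OF m r])
      moreover have "(q+1)*(q-1) + 1 = q^2" using False
        by (cases q) (auto simp: power2_eq_square algebra_simps)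
      ultimately have "q^2 \<le> 4*(m*r) + 3" by linarith
      then have "q^2 div 4 \<le> (4*(m*r) + 3) div 4" by (rule div_le_mono)
      also have "\<dots> = m*r" by simp
      finally show ?thesis using n by simp
    qed
  qed
qed

context falg begin

lemma finite_any: "finite (X::'a set)"
  by (rule finite_subset[OF subset_UNIV finUNIV])

lemma rep_span:
  assumes "y \<in> span (f ` D)" "finite D"
  shows "\<exists>u. y = (\<Sum>c\<in>D. s (u c) (f c))"
proof -
  have "subspace {y. \<exists>u. y = (\<Sum>c\<in>D. s (u c) (f c))}"
    unfolding subspace_def
  proof (intro conjI ballI allI)
    show "0 \<in> {y. \<exists>u. y = (\<Sum>c\<in>D. s (u c) (f c))}"
      by (intro CollectI exI[of _ "\<lambda>_. 0"]) simp
    fix x y assume "x \<in> {y. \<exists>u. y = (\<Sum>c\<in>D. s (u c) (f c))}" "y \<in> {y. \<exists>u. y = (\<Sum>c\<in>D. s (u c) (f c))}"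
    then obtain u u' where "x = (\<Sum>c\<in>D. s (u c) (f c))" "y = (\<Sum>c\<in>D. s (u' c) (f c))" by blast
    then show "x + y \<in> {y. \<exists>u. y = (\<Sum>c\<in>D. s (u c) (f c))}"
      by (intro CollectI exI[of _ "\<lambda>c. u c + u' c"]) (simp add: scale_left_distrib sum.distrib)
  next
    fix a x assume "x \<in> {y. \<exists>u. y = (\<Sum>c\<in>D. s (u c) (f c))}"
    then obtain u where "x = (\<Sum>c\<in>D. s (u c) (f c))" by blast
    then show "s a x \<in> {y. \<exists>u. y = (\<Sum>c\<in>D. s (u c) (f c))}"
      by (intro CollectI exI[of _ "\<lambda>c. a * u c"]) (simp add: scale_sum_right)
  qed
  moreover have "z \<in> {y. \<exists>u. y = (\<Sum>c\<in>D. s (u c) (f c))}" if "z \<in> f ` D" for z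
  proof -
    obtain c0 where c0: "c0 \<in> D" "z = f c0" using \<open>z \<in> f ` D\<close> by blast
    have "(\<Sum>c\<in>D. s (if c = c0 then 1 else 0) (f c)) = (\<Sum>c\<in>D. if c = c0 then f c else 0)"
      by (rule sum.cong) auto
    also have "\<dots> = f c0" using c0 assms(2) by simp
    finally show ?thesis using c0 by (intro CollectI exI[of _ "\<lambda>c. if c = c0 then 1 else 0"]) simp
  qed
  ultimately have "y \<in> {y. \<exists>u. y = (\<Sum>c\<in>D. s (u c) (f c))}"
    by (intro span_subspace_induct[OF assms(1)]) auto
  then show ?thesis by simp
qed

lemma expand_sum:
  assumes "finite D" "finite W"
  shows "(\<Sum>c\<in>D. s (u c) (c + (\<Sum>w\<in>W. s (M c w) w)))
     = (\<Sum>c\<in>D. s (u c) c) + (\<Sum>w\<in>W. s (\<Sum>c\<in>D. u c * M c w) w)"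
proof -
  have "(\<Sum>c\<in>D. s (u c) (c + (\<Sum>w\<in>W. s (M c w) w)))
     = (\<Sum>c\<in>D. s (u c) c) + (\<Sum>c\<in>D. \<Sum>w\<in>W. s (u c * M c w) w)"
    by (simp add: scale_right_distrib sum.distrib scale_sum_right)
  also have "(\<Sum>c\<in>D. \<Sum>w\<in>W. s (u c * M c w) w) = (\<Sum>w\<in>W. \<Sum>c\<in>D. s (u c * M c w) w)"
    by (rule sum.swap)
  also have "\<dots> = (\<Sum>w\<in>W. s (\<Sum>c\<in>D. u c * M c w) w)"
    by (simp add: scale_sum_left)
  finally show ?thesis .
qed


lemma count_lower:
  assumes nil: "\<And>xs (a::'a). length xs = e \<Longrightarrow> foldr (*) xs a = 0"
  and J: "is_ideal s J" and fk: "finite (UNIV::'k set)"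
  and DW: "D \<inter> W = {}" "independent (D \<union> W)" "D \<union> W \<subseteq> J" "W \<subseteq> AV s J"
     "J \<subseteq> msum (span D) (AV s J)"
  shows "card (UNIV::'k set) ^ (card D * card W) \<le> card {V. subspace V \<and> Gmap s V = J}"
proof -
  have fD: "finite D" and fW: "finite W" by (rule finite_any)+
  have Js: "subspace J" using J ideal_subspace by blast
  have AJs: "subspace (AV s J)" by (rule subspace_AV)
  define \<phi> where "\<phi> M c = c + (\<Sum>w\<in>W. s (M c w) w)" for M :: "'a \<Rightarrow> 'a \<Rightarrow> 'k" and c
  define VM where "VM M = span (\<phi> M ` D)" for M
  define P where "P = PiE D (\<lambda>_. PiE W (\<lambda>_. UNIV::'k set))"
  have cardP: "card P = card (UNIV::'k set) ^ (card D * card W)"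
    unfolding P_def using fD fW
    by (simp add: card_PiE prod_constant flip: power_mult) (simp add: mult.commute)
  have SW: "(\<Sum>w\<in>W. s (M c w) w) \<in> AV s J" for M c
    using DW(4) by (intro subspace_sum[OF AJs] subspace_scale[OF AJs]) auto
  have img: "VM ` P \<subseteq> {V. subspace V \<and> Gmap s V = J}"
  proof clarify
    fix M assume "M \<in> P"
    have sub: "VM M \<subseteq> J" unfolding VM_def
    proof (rule span_minimal[OF _ Js], clarify)
      fix c assume "c \<in> D"
      then have "c \<in> J" using DW(3) by blast
      moreover have "(\<Sum>w\<in>W. s (M c w) w) \<in> J" using SW[of M c] AV_sub[OF J subset_refl] by blast
      ultimately show "\<phi> M c \<in> J" unfolding \<phi>_def using subspace_add[OF Js] by blast
    qed
    have spD: "span D \<subseteq> msum (VM M) (AV s J)"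
    proof (rule span_minimal)
      show "subspace (msum (VM M) (AV s J))" by (intro subspace_msum AJs) (simp add: VM_def)
      show "D \<subseteq> msum (VM M) (AV s J)"
      proof
        fix c assume "c \<in> D"
        have "\<phi> M c \<in> VM M" unfolding VM_def using \<open>c \<in> D\<close> by (intro span_base) auto
        moreover have "- (\<Sum>w\<in>W. s (M c w) w) \<in> AV s J" by (rule subspace_neg[OF AJs SW])
        moreover have "c = \<phi> M c + - (\<Sum>w\<in>W. s (M c w) w)" unfolding \<phi>_def by (simp only: add.assoc right_minus add_0_right)
        ultimately show "c \<in> msum (VM M) (AV s J)" unfolding msum_def
          by (intro CollectI exI[of _ "\<phi> M c"] exI[of _ "- (\<Sum>w\<in>W. s (M c w) w)"]) simp
      qed
    qed
    have cov: "J \<subseteq> msum (VM M) (AV s J)"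
    proof
      fix j assume "j \<in> J"
      then obtain d y where "j = d + y" "d \<in> span D" "y \<in> AV s J" using DW(5) unfolding msum_def by blast
      then obtain v y' where "d = v + y'" "v \<in> VM M" "y' \<in> AV s J" using spD unfolding msum_def by blast
      have "y' + y \<in> AV s J" using \<open>y \<in> AV s J\<close> \<open>y' \<in> AV s J\<close> subspace_add[OF AJs] by blast
      then show "j \<in> msum (VM M) (AV s J)" unfolding msum_def
        using \<open>j = d + y\<close> \<open>d = v + y'\<close> \<open>v \<in> VM M\<close>
        by (intro CollectI exI[of _ v] exI[of _ "y' + y"]) (simp add: add.assoc)
    qed
    show "subspace (VM M) \<and> Gmap s (VM M) = J"
      using Gmap_eq[OF nil J _ sub cov] by (simp add: VM_def)
  qed
  have inj: "inj_on VM P"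
  proof (rule inj_onI)
    fix M M' assume M: "M \<in> P" and M': "M' \<in> P" and eq: "VM M = VM M'"
    have "M c w = M' c w" if c: "c \<in> D" and w: "w \<in> W" for c w
    proof -
      have "\<phi> M c \<in> VM M" unfolding VM_def using c by (intro span_base) auto
      then have "\<phi> M c \<in> VM M'" using eq by simp
      moreover have "\<phi> M' c \<in> VM M'" unfolding VM_def using c by (intro span_base) auto
      ultimately have "\<phi> M c - \<phi> M' c \<in> VM M'" unfolding VM_def by (rule span_diff)
      moreover have "\<phi> M c - \<phi> M' c = (\<Sum>w\<in>W. s (M c w - M' c w) w)"
        unfolding \<phi>_def by (simp add: scale_left_diff_distrib sum_subtractf)
      ultimately have "(\<Sum>w\<in>W. s (M c w - M' c w) w) \<in> span (\<phi> M' ` D)" unfolding VM_def by simp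
      from rep_span[OF this fD] obtain u where u: "(\<Sum>w\<in>W. s (M c w - M' c w) w) = (\<Sum>c\<in>D. s (u c) (\<phi> M' c))"
        by blast
      define \<beta> where "\<beta> w = (\<Sum>c\<in>D. u c * M' c w) - (M c w - M' c w)" for w
      define \<gamma> where "\<gamma> v = (if v \<in> D then u v else \<beta> v)" for v
      have "(\<Sum>c\<in>D. s (u c) c) + (\<Sum>w\<in>W. s (\<Sum>c\<in>D. u c * M' c w) w) = (\<Sum>w\<in>W. s (M c w - M' c w) w)"
        using u expand_sum[OF fD fW, of u M'] unfolding \<phi>_def by simp
      moreover have eqb: "(\<Sum>w\<in>W. s (\<beta> w) w) = (\<Sum>w\<in>W. s (\<Sum>c\<in>D. u c * M' c w) w) - (\<Sum>w\<in>W. s (M c w - M' c w) w)"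
        unfolding \<beta>_def by (simp add: scale_left_diff_distrib sum_subtractf)
      ultimately have "(\<Sum>c\<in>D. s (u c) c) + (\<Sum>w\<in>W. s (\<beta> w) w) = 0"
        by (simp only: eqb add_diff_eq diff_self)
      moreover have "(\<Sum>c\<in>D. s (u c) c) = (\<Sum>c\<in>D. s (\<gamma> c) c)" by (rule sum.cong) (auto simp: \<gamma>_def)
      moreover have "(\<Sum>w\<in>W. s (\<beta> w) w) = (\<Sum>w\<in>W. s (\<gamma> w) w)"
        using DW(1) by (intro sum.cong) (auto simp: \<gamma>_def)
      ultimately have z: "(\<Sum>v\<in>D \<union> W. s (\<gamma> v) v) = 0"
        using DW(1) fD fW by (simp add: sum.union_disjoint)
      have g0: "\<gamma> v = 0" if "v \<in> D \<union> W" for v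
        using independentD[OF DW(2) _ subset_refl z that] fD fW by simp
      have "u c' = 0" if "c' \<in> D" for c' using g0[of c'] that by (simp add: \<gamma>_def)
      then have "(\<Sum>c\<in>D. u c * M' c w) = 0" by simp
      moreover have "w \<notin> D" using w DW(1) by blast
      then have "\<beta> w = 0" using g0[of w] w by (simp add: \<gamma>_def)
      ultimately show ?thesis unfolding \<beta>_def by simp
    qed
    then have inner: "M c = M' c" if "c \<in> D" for c
      using M M' that unfolding P_def by (intro PiE_ext[of "M c" W _ "M' c"]) auto
    show "M = M'" using M M' unfolding P_def by (rule PiE_ext) (rule inner)
  qed
  have "card (VM ` P) \<le> card {V. subspace V \<and> Gmap s V = J}"
  proof (rule card_mono[OF _ img])
    have "finite (Pow (UNIV::'a set))" using finite_Pow_iff finUNIV by blast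
    then show "finite {V. subspace V \<and> Gmap s V = J}" by (rule finite_subset[rotated]) auto
  qed
  then show ?thesis using card_image[OF inj] cardP by simp
qed


lemma exists_DW:
  assumes J: "is_ideal s J" and x: "x \<in> J"
  obtains D W where "D \<inter> W = {}" "independent (D \<union> W)" "D \<union> W \<subseteq> J" "W \<subseteq> AV s J"
    "J \<subseteq> msum (span D) (AV s J)" "(qdim s x)^2 div 4 \<le> card D * card W"
proof -
  have AJ: "AV s J \<subseteq> J" by (rule AV_sub[OF J subset_refl])
  obtain BA where BA: "BA \<subseteq> AV s J" "independent BA" "AV s J \<subseteq> span BA"
    using maximal_independent_subset[of "AV s J"] by blast
  obtain B where B: "BA \<subseteq> B" "B \<subseteq> J" "independent B" "J \<subseteq> span B"
    using maximal_independent_subset_extend[of BA J] BA(1,2) AJ by blast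
  define C where "C = B - BA"
  have fB: "finite B" "finite BA" "finite C" by (rule finite_any)+
  define m r d where "m = card C" "r = card BA" "d = card B"
  have dmr: "d = m + r" unfolding m_r_d_def C_def using card_Diff_subset[OF fB(2) B(1)] card_mono[OF fB(1) B(1)] by simp
  define I where "I = {s c x + a * x | c a. True}"
  have q: "qdim s x = dim I" unfolding qdim_def I_def by simp
  have "I \<subseteq> J"
  proof
    fix y assume "y \<in> I"
    then obtain c a where "y = s c x + a * x" unfolding I_def by blast
    have Js: "subspace J" using J by (rule ideal_subspace)
    have "s c x \<in> J" by (rule subspace_scale[OF Js x])
    moreover have "a * x \<in> J" by (rule ideal_mult[OF J x])
    ultimately show "y \<in> J" unfolding \<open>y = s c x + a * x\<close> by (rule subspace_add[OF Js])
  qed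
  then have qd: "qdim s x \<le> d" unfolding q m_r_d_def using B(4) fB(1) by (intro dim_le_card) auto
  have "I \<subseteq> span (insert x BA)"
  proof
    fix y assume "y \<in> I"
    then obtain c a where y: "y = s c x + a * x" unfolding I_def by blast
    have "a * x \<in> AV s J" unfolding AV_def using x by (intro span_base) blast
    then have "a * x \<in> span (insert x BA)" using BA(3) span_mono[of BA "insert x BA"] by blast
    moreover have "s c x \<in> span (insert x BA)" by (intro span_scale span_base) simp
    ultimately show "y \<in> span (insert x BA)" unfolding y by (intro span_add)
  qed
  then have "qdim s x \<le> card (insert x BA)" unfolding q using fB by (intro dim_le_card) auto
  also have "\<dots> \<le> r + 1" unfolding m_r_d_def using fB(2) by (simp add: card_insert_if)
  finally have qr: "qdim s x \<le> r + 1" .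
  define n2 where "n2 = (if m \<le> d div 2 then d - d div 2 else r)"
  have ar: "(qdim s x)^2 div 4 \<le> (d - n2) * n2" "n2 \<le> r"
    using arith_main[OF dmr qd qr] unfolding n2_def by auto
  obtain W where W: "W \<subseteq> BA" "card W = n2" "finite W"
    using obtain_subset_with_card_n[of n2 BA] ar(2) unfolding m_r_d_def by blast
  define D where "D = C \<union> (BA - W)"
  have disj: "D \<inter> W = {}" unfolding D_def C_def using W(1) by blast
  have DW: "D \<union> W = B" unfolding D_def C_def using W(1) B(1) by blast
  have cD: "card D = d - n2"
  proof -
    have "card D = card C + card (BA - W)" unfolding D_def
      using fB by (intro card_Un_disjoint) (auto simp: C_def finite_any)
    also have "card (BA - W) = r - n2" unfolding m_r_d_def using card_Diff_subset[OF W(3) W(1)] W(2) by simp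
    finally show ?thesis using dmr ar(2) unfolding m_r_d_def by simp
  qed
  have cov: "J \<subseteq> msum (span D) (AV s J)"
  proof
    fix j assume "j \<in> J"
    moreover have "C \<union> BA = B" unfolding C_def using B(1) by blast
    ultimately have "j \<in> span (C \<union> BA)" using B(4) by auto
    then obtain y z where "j = y + z" "y \<in> span C" "z \<in> span BA" unfolding span_Un by blast
    moreover have "span C \<subseteq> span D" unfolding D_def by (intro span_mono) blast
    moreover have "span BA \<subseteq> AV s J" using BA(1) by (intro span_minimal subspace_AV)
    ultimately show "j \<in> msum (span D) (AV s J)" unfolding msum_def by blast
  qed
  show ?thesis
  proof (rule that[OF disj])
    show "independent (D \<union> W)" using DW B(3) by simp
    show "D \<union> W \<subseteq> J" using DW B(2) by simp
    show "W \<subseteq> AV s J" using W(1) BA(1) by blast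
    show "J \<subseteq> msum (span D) (AV s J)" by (rule cov)
    show "(qdim s x)^2 div 4 \<le> card D * card W" using ar(1) cD W(2) by simp
  qed
qed

end

theorem proposition2p4:
  fixes s :: "'k::{field,finite} \<Rightarrow> 'a::comm_ring \<Rightarrow> 'a"
    and p e t :: nat
  assumes p: "prime p" and card_k: "card (UNIV :: 'k set) = p"
    and alg: "is_algebra s"
    and fd: "fin_dim_alg s"
    and e1: "e \<ge> 1"
    and Ae: "alg_pow s e \<noteq> {0}"
    and Ae1: "alg_pow s (e + 1) = {0}"
    and t: "1 \<le> t" "t \<le> e"
  shows "(\<forall>J. is_ideal s J \<and> J \<subseteq> annN t \<and> \<not> J \<subseteq> annN (t - 1) \<longrightarrow>
            card {V. module.subspace s V \<and> Gmap s V = J} \<ge> p ^ ((qmin s t)\<^sup>2 div 4))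
       \<and> int p ^ ((qmin s t)\<^sup>2 div 4)
           * (int (num_ideals s (annN t)) - int (num_ideals s (annN (t - 1))))
         \<le> int (num_subspaces s (annN t)) - int (num_subspaces s (annN (t - 1)))"
proof -
  have vs: "vector_space s" and sm: "\<And>c x y. s c (x * y) = s c x * y"
    using alg unfolding is_algebra_def by auto
  interpret vector_space s by (rule vs)
  have finA: "finite (UNIV::'a set)"
  proof -
    obtain B where B: "finite B" "span B = UNIV" using fd unfolding fin_dim_alg_def by blast
    have "UNIV = range (\<lambda>u. \<Sum>v\<in>B. s (u v) v)" using span_finite[OF B(1)] B(2) by simp
    also have "\<dots> \<subseteq> (\<lambda>u. \<Sum>v\<in>B. s (u v) v) ` (PiE B (\<lambda>_. UNIV))"
    proof clarify
      fix u :: "'a \<Rightarrow> 'k"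
      have "(\<Sum>v\<in>B. s (u v) v) = (\<Sum>v\<in>B. s (restrict u B v) v)" by (rule sum.cong) auto
      moreover have "restrict u B \<in> PiE B (\<lambda>_. UNIV)" by simp
      ultimately show "(\<Sum>v\<in>B. s (u v) v) \<in> (\<lambda>u. \<Sum>v\<in>B. s (u v) v) ` (PiE B (\<lambda>_. UNIV))" by blast
    qed
    finally show ?thesis using B(1) by (meson finite_PiE finite_imageI finite_subset finite)
  qed
  interpret falg s by unfold_locales (auto simp: sm finA)
  have nil: "\<And>(xs::'a list) (a::'a). length xs = e \<Longrightarrow> foldr (*) xs a = 0"
  proof -
    fix xs :: "'a list" and a :: 'a assume "length xs = e"
    then have "foldr (*) xs a \<in> alg_pow s (e + 1)" unfolding alg_pow_def by (intro span_base) auto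
    then show "foldr (*) xs a = 0" using Ae1 by simp
  qed
  have fk: "finite (UNIV::'k set)" by simp
  have p1: "1 \<le> p" using p prime_ge_1_nat by blast
  define X where "X = (qmin s t)\<^sup>2 div 4"
  have part1: "p ^ X \<le> card {V. subspace V \<and> Gmap s V = J}"
    if J: "is_ideal s J" "J \<subseteq> annN t" "\<not> J \<subseteq> annN (t - 1)" for J
  proof -
    obtain x where x: "x \<in> J" "x \<notin> annN (t - 1)" using J(3) by blast
    have xN: "x \<in> annN t - annN (t - 1)" using x J(2) by blast
    have "qmin s t \<le> qdim s x" unfolding qmin_def
      by (rule Min_le) (use xN finite_any in auto)
    then have "X \<le> (qdim s x)^2 div 4" unfolding X_def by (intro div_le_mono power_mono) auto
    moreover obtain D W where DW: "D \<inter> W = {}" "independent (D \<union> W)" "D \<union> W \<subseteq> J" "W \<subseteq> AV s J"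
      "J \<subseteq> msum (span D) (AV s J)" "(qdim s x)^2 div 4 \<le> card D * card W"
      using exists_DW[OF J(1) x(1)] by blast
    ultimately have "X \<le> card D * card W" by linarith
    then have "p ^ X \<le> p ^ (card D * card W)" by (rule power_increasing[OF _ p1])
    also have "\<dots> \<le> card {V. subspace V \<and> Gmap s V = J}"
      using count_lower[OF nil J(1) fk DW(1-5)] card_k by simp
    finally show ?thesis .
  qed
  define a where "a = t - 1"
  have Na: "annN a \<subseteq> (annN t :: 'a set)" unfolding a_def by (rule annN_mono') simp
  define St where "St k = {V. subspace V \<and> V \<subseteq> (annN k :: 'a set)}" for k
  define It where "It k = {I. is_ideal s I \<and> I \<subseteq> (annN k :: 'a set)}" for k
  have finP: "finite (S :: 'a set set)" for S
    using finite_subset[OF subset_UNIV] finA by (metis finite_Pow_iff Pow_UNIV)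
  have Ssub: "St a \<subseteq> St t" and Isub: "It a \<subseteq> It t" using Na unfolding St_def It_def by auto
  define F where "F J = {V. subspace V \<and> Gmap s V = J}" for J
  have Fsub: "F J \<subseteq> St t - St a" if "J \<in> It t - It a" for J
  proof
    fix V assume V: "V \<in> F J"
    have J: "is_ideal s J" "J \<subseteq> annN t" "\<not> J \<subseteq> annN a" using that unfolding It_def by auto
    have VJ: "V \<subseteq> J" using V sub_Gmap unfolding F_def by blast
    have "\<not> V \<subseteq> annN a"
    proof
      assume "V \<subseteq> annN a"
      then have "Gmap s V \<subseteq> annN a" by (rule Gmap_sub[OF ideal_annN])
      then show False using V J(3) unfolding F_def by auto
    qed
    then show "V \<in> St t - St a" using V VJ J(2) unfolding F_def St_def by auto
  qed
  have disj: "\<forall>J\<in>It t - It a. \<forall>J'\<in>It t - It a. J \<noteq> J' \<longrightarrow> F J \<inter> F J' = {}"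
    unfolding F_def by auto
  have "card (It t - It a) * p ^ X = (\<Sum>J\<in>It t - It a. p ^ X)" by simp
  also have "\<dots> \<le> (\<Sum>J\<in>It t - It a. card (F J))"
  proof (rule sum_mono)
    fix J assume "J \<in> It t - It a"
    then show "p ^ X \<le> card (F J)" unfolding F_def It_def a_def
      by (intro part1) auto
  qed
  also have "\<dots> = card (\<Union>J\<in>It t - It a. F J)"
    by (rule card_UN_disjoint[symmetric, OF finP _ disj]) (simp add: finP)
  also have "\<dots> \<le> card (St t - St a)"
    by (rule card_mono[OF finP]) (use Fsub in blast)
  also have "\<dots> = card (St t) - card (St a)" by (rule card_Diff_subset[OF finP Ssub])
  finally have main: "card (It t - It a) * p ^ X \<le> card (St t) - card (St a)" .
  have ci: "card (It t - It a) = card (It t) - card (It a)" by (rule card_Diff_subset[OF finP Isub])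
  have le1: "card (It a) \<le> card (It t)" by (rule card_mono[OF finP Isub])
  have le2: "card (St a) \<le> card (St t)" by (rule card_mono[OF finP Ssub])
  have part2: "int p ^ X * (int (card (It t)) - int (card (It a))) \<le> int (card (St t)) - int (card (St a))"
  proof -
    have "int (card (It t - It a) * p ^ X) \<le> int (card (St t) - card (St a))"
      using main by linarith
    then show ?thesis using ci le1 le2 by (simp add: of_nat_diff mult.commute)
  qed
  show ?thesis
  proof
    show "\<forall>J. is_ideal s J \<and> J \<subseteq> annN t \<and> \<not> J \<subseteq> annN (t - 1) \<longrightarrow>
            card {V. module.subspace s V \<and> Gmap s V = J} \<ge> p ^ ((qmin s t)\<^sup>2 div 4)"
      using part1 unfolding X_def by blast
    show "int p ^ ((qmin s t)\<^sup>2 div 4)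
           * (int (num_ideals s (annN t)) - int (num_ideals s (annN (t - 1))))
         \<le> int (num_subspaces s (annN t)) - int (num_subspaces s (annN (t - 1)))"
      using part2 unfolding X_def num_ideals_def num_subspaces_def It_def St_def a_def by simp
  qed
qed

end
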